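(* Let $\mathcal{S}=(S,\overline{S})$ be a bisection, $u$ a vertex of the graph, $(A_u,B_u)$ a $u$-pair for $\mathcal{S}$, and $\mathcal{T}$ the bisection associated with $(A_u,B_u)$. Then $\mathrm{def}_{\mathcal{T}}(u)\ge a_u+1$.
   Context: $G$ is a finite simple undirected graph with an odd number $n$ of vertices; $N(u)$ is the set of neighbors of $u$ and $\overline{N}(u)$ the set of vertices other than $u$ not adjacent to $u$. Each vertex $x$ has stubbornness $\alpha_x\in(0,1)$ and $a_x=\lfloor\alpha_x/(1-\alpha_x)\rfloor$. $W(A,B)$ is the number of edges with one endpoint in $A$ and the other in $B$. A bisection $(S,\overline{S})$ partitions the vertices with $|S|=\frac{n+1}{2}$, $|\overline{S}|=\frac{n-1}{2}$. Deficiency: $\mathrm{def}_{\mathcal{S}}(x)=W(x,S)-W(x,\overline{S})$ for $x\in S$, $W(x,\overline{S})-W(x,S)$ for $x\in\overline{S}$. Rank: $\mathrm{rank}_{\mathcal{S}}(u)=\lceil (a_u+1-\mathrm{def}_{\mathcal{S}}(u))/2\rceil$. A $u$-pair for $\mathcal{S}$ is a pair of sets $(A_u,B_u)$ with: if $u\in S$, $A_u\subseteq S\cap\overline{N}(u)$, $B_u\subseteq\overline{S}\cap N(u)$, $|A_u|=|B_u|=\mathrm{rank}_{\mathcal{S}}(u)$; if $u\in\overline{S}$, $A_u\subseteq S\cap N(u)$, $B_u\subseteq\overline{S}\cap\overline{N}(u)$, $|A_u|=\mathrm{rank}_{\mathcal{S}}(u)$, $|B_u|=\mathrm{rank}_{\mathcal{S}}(u)-1$.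 The bisection associated with the $u$-pair is $\mathcal{T}=(S\setminus A_u\cup B_u,\ \overline{S}\setminus B_u\cup A_u)$ if $u\in S$, and $\mathcal{T}=(\overline{S}\setminus B_u\cup A_u,\ S\setminus A_u\cup B_u)$ if $u\in\overline{S}$. *)

theory Defs
  imports Complex_Main
begin

definition simple_graph :: "'a set \<Rightarrow> ('a \<Rightarrow> 'a \<Rightarrow> bool) \<Rightarrow> bool" where
  "simple_graph V E \<longleftrightarrow> finite V \<and> (\<forall>x y. E x y \<longrightarrow> x \<in> V \<and> y \<in> V)
     \<and> (\<forall>x y. E x y \<longrightarrow> E y x) \<and> (\<forall>x. \<not> E x x)"

definition W :: "('a \<Rightarrow> 'a \<Rightarrow> bool) \<Rightarrow> 'a set \<Rightarrow> 'a set \<Rightarrow> nat" where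
  "W E A B = card {{x, y} | x y. x \<in> A \<and> y \<in> B \<and> E x y}"

definition nbhd :: "('a \<Rightarrow> 'a \<Rightarrow> bool) \<Rightarrow> 'a \<Rightarrow> 'a set" where
  "nbhd E u = {v. E u v}"

definition non_nbhd :: "'a set \<Rightarrow> ('a \<Rightarrow> 'a \<Rightarrow> bool) \<Rightarrow> 'a \<Rightarrow> 'a set" where
  "non_nbhd V E u = {v \<in> V. v \<noteq> u \<and> \<not> E u v}"

definition stub_a :: "('a \<Rightarrow> real) \<Rightarrow> 'a \<Rightarrow> int" where
  "stub_a \<alpha> x = \<lfloor>\<alpha> x / (1 - \<alpha> x)\<rfloor>"

definition is_bisection :: "'a set \<Rightarrow> 'a set \<Rightarrow> 'a set \<Rightarrow> bool" where
  "is_bisection V S Sb \<longleftrightarrow> S \<subseteq> V \<and> Sb = V - S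
     \<and> card S = (card V + 1) div 2 \<and> card Sb = (card V - 1) div 2"

definition deficiency :: "('a \<Rightarrow> 'a \<Rightarrow> bool) \<Rightarrow> 'a set \<Rightarrow> 'a set \<Rightarrow> 'a \<Rightarrow> int" where
  "deficiency E S Sb x =
     (if x \<in> S then int (W E {x} S) - int (W E {x} Sb)
      else int (W E {x} Sb) - int (W E {x} S))"

definition rank :: "('a \<Rightarrow> real) \<Rightarrow> ('a \<Rightarrow> 'a \<Rightarrow> bool) \<Rightarrow> 'a set \<Rightarrow> 'a set \<Rightarrow> 'a \<Rightarrow> int" where
  "rank \<alpha> E S Sb u = \<lceil>real_of_int (stub_a \<alpha> u + 1 - deficiency E S Sb u) / 2\<rceil>"

definition is_upair :: "'a set \<Rightarrow> ('a \<Rightarrow> 'a \<Rightarrow> bool) \<Rightarrow> ('a \<Rightarrow> real) \<Rightarrow> 'a set \<Rightarrow> 'a set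
    \<Rightarrow> 'a \<Rightarrow> 'a set \<Rightarrow> 'a set \<Rightarrow> bool" where
  "is_upair V E \<alpha> S Sb u A B \<longleftrightarrow>
     (u \<in> S \<longrightarrow> A \<subseteq> S \<inter> non_nbhd V E u \<and> B \<subseteq> Sb \<inter> nbhd E u
        \<and> int (card A) = rank \<alpha> E S Sb u \<and> int (card B) = rank \<alpha> E S Sb u)
   \<and> (u \<in> Sb \<longrightarrow> A \<subseteq> S \<inter> nbhd E u \<and> B \<subseteq> Sb \<inter> non_nbhd V E u
        \<and> int (card A) = rank \<alpha> E S Sb u \<and> int (card B) = rank \<alpha> E S Sb u - 1)"

definition assoc_bisection :: "'a set \<Rightarrow> 'a set \<Rightarrow> 'a \<Rightarrow> 'a set \<Rightarrow> 'a set \<Rightarrow> 'a set \<times> 'a set" where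
  "assoc_bisection S Sb u A B =
     (if u \<in> S then ((S - A) \<union> B, (Sb - B) \<union> A) else ((Sb - B) \<union> A, (S - A) \<union> B))"

end

theory Submission
  imports Defs
begin

lemma W_single: "W E {x} X = card {y \<in> X. E x y}"
proof -
  have "{{x, y} | x' y. x' \<in> {x} \<and> y \<in> X \<and> E x' y} = (\<lambda>y. {x,y}) ` {y \<in> X. E x y}"
    by auto
  moreover have "inj_on (\<lambda>y. {x,y}) {y \<in> X. E x y}"
    by (auto simp: inj_on_def doubleton_eq_iff)
  ultimately show ?thesis unfolding W_def
    by (simp add: card_image)
qed

lemma rank_ge: "2 * rank \<alpha> E S Sb u \<ge> stub_a \<alpha> u + 1 - deficiency E S Sb u"
proof -
  have "real_of_int (rank \<alpha> E S Sb u) \<ge> real_of_int (stub_a \<alpha> u + 1 - deficiency E S Sb u) / 2"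
    unfolding rank_def by (rule le_of_int_ceiling)
  then have "real_of_int (stub_a \<alpha> u + 1 - deficiency E S Sb u) \<le> real_of_int (2 * rank \<alpha> E S Sb u)"
    by simp
  then show ?thesis by (simp only: of_int_le_iff)
qed

theorem lemma3:
  fixes V :: "'a set" and E :: "'a \<Rightarrow> 'a \<Rightarrow> bool" and \<alpha> :: "'a \<Rightarrow> real"
    and S Sb A B :: "'a set" and u :: 'a
  assumes "simple_graph V E"
    and "odd (card V)"
    and "\<forall>x\<in>V. 0 < \<alpha> x \<and> \<alpha> x < 1"
    and "is_bisection V S Sb"
    and "u \<in> V"
    and "is_upair V E \<alpha> S Sb u A B"
  shows "deficiency E (fst (assoc_bisection S Sb u A B)) (snd (assoc_bisection S Sb u A B)) u
           \<ge> stub_a \<alpha> u + 1"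
proof -
  define N where "N = {y. E u y}"
  have fV: "finite V" and NV: "N \<subseteq> V" using assms(1) unfolding simple_graph_def N_def by auto
  have fN: "finite N" using fV NV finite_subset by auto
  have Wc: "\<And>X. W E {u} X = card (N \<inter> X)"
    unfolding W_single N_def by (metis Collect_conj_eq Int_commute Collect_mem_eq)
  have SV: "S \<subseteq> V" and Sb: "Sb = V - S" using assms(4) unfolding is_bisection_def by auto
  have r: "2 * rank \<alpha> E S Sb u \<ge> stub_a \<alpha> u + 1 - deficiency E S Sb u" by (rule rank_ge)
  show ?thesis
  proof (cases "u \<in> S")
    case True
    have A: "A \<subseteq> S" "A \<inter> N = {}" "u \<notin> A" and B: "B \<subseteq> Sb" "B \<subseteq> N"
      and cA: "int (card B) = rank \<alpha> E S Sb u"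
      using assms(6) True unfolding is_upair_def non_nbhd_def nbhd_def N_def by auto
    have fB: "finite B" using B fN finite_subset by auto
    have u1: "u \<in> (S - A) \<union> B" using True A by auto
    have e1: "N \<inter> ((S - A) \<union> B) = (N \<inter> S) \<union> B" using A B by auto
    have d1: "(N \<inter> S) \<inter> B = {}" using B Sb by auto
    have c1: "card (N \<inter> ((S - A) \<union> B)) = card (N \<inter> S) + card B"
      unfolding e1 using d1 fB fN by (simp add: card_Un_disjoint)
    have e2: "N \<inter> ((Sb - B) \<union> A) = (N \<inter> Sb) - B" using A B by auto
    have c2: "card (N \<inter> ((Sb - B) \<union> A)) = card (N \<inter> Sb) - card B"
      unfolding e2 using B fB by (simp add: card_Diff_subset)
    have c2': "card B \<le> card (N \<inter> Sb)" using B fN by (intro card_mono) auto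
    have dS: "deficiency E S Sb u = int (card (N \<inter> S)) - int (card (N \<inter> Sb))"
      unfolding deficiency_def using True Wc by simp
    have "deficiency E (fst (assoc_bisection S Sb u A B)) (snd (assoc_bisection S Sb u A B)) u
       = int (card (N \<inter> S)) + card B - (int (card (N \<inter> Sb)) - card B)"
      unfolding assoc_bisection_def deficiency_def using True u1 Wc c1 c2 c2' by simp
    then show ?thesis using r dS cA by linarith
  next
    case False
    have uSb: "u \<in> Sb" using False Sb assms(5) by auto
    have A: "A \<subseteq> S" "A \<subseteq> N" and B: "B \<subseteq> Sb" "B \<inter> N = {}" "u \<notin> B"
      and cA: "int (card A) = rank \<alpha> E S Sb u"
      using assms(6) uSb unfolding is_upair_def non_nbhd_def nbhd_def N_def by auto
    have fA: "finite A" using A fN finite_subset by auto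
    have u1: "u \<in> (Sb - B) \<union> A" using uSb B by auto
    have e1: "N \<inter> ((Sb - B) \<union> A) = (N \<inter> Sb) \<union> A" using A B by auto
    have d1: "(N \<inter> Sb) \<inter> A = {}" using A Sb by auto
    have c1: "card (N \<inter> ((Sb - B) \<union> A)) = card (N \<inter> Sb) + card A"
      unfolding e1 using d1 fA fN by (simp add: card_Un_disjoint)
    have e2: "N \<inter> ((S - A) \<union> B) = (N \<inter> S) - A" using A B by auto
    have c2: "card (N \<inter> ((S - A) \<union> B)) = card (N \<inter> S) - card A"
      unfolding e2 using A fA by (simp add: card_Diff_subset)
    have c2': "card A \<le> card (N \<inter> S)" using A fN by (intro card_mono) auto
    have dS: "deficiency E S Sb u = int (card (N \<inter> Sb)) - int (card (N \<inter> S))"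
      unfolding deficiency_def using False Wc by simp
    have "deficiency E (fst (assoc_bisection S Sb u A B)) (snd (assoc_bisection S Sb u A B)) u
       = int (card (N \<inter> Sb)) + card A - (int (card (N \<inter> S)) - card A)"
      unfolding assoc_bisection_def deficiency_def using False u1 Wc c1 c2 c2' by simp
    then show ?thesis using r dS cA by linarith
  qed
qed

end
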